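(* Let $\Omega=\{\omega_r=(1,r)^{\mathrm t} : r\in\mathcal R\}\subset\mathbb R^{n+1}$ be a GPT state space with unit effect $u=(1,\mathbf 0)^{\mathrm t}$, and suppose every effect $e\in\mathcal E$ can be written as $e=\gamma\,(1,m)^{\mathrm t}$ with $\gamma\in[0,1]$ and $m\in\mathcal M$, for some set $\mathcal M\subset\mathbb R^n$. Then $$\chi_C(\Omega)\le \sup_{r\in\mathcal R,\ m\in\mathcal M}\log_2(1+m\cdot r)\le \log_2(1+MR),$$ where $M=\sup_{m\in\mathcal M}\lVert m\rVert$ and $R=\sup_{r\in\mathcal R}\lVert r\rVert$.
   Context: A single-system GPT state space is a set $\Omega=\{\omega_r=(1,r)^{\mathrm t}: r\in\mathcal R\}\subset\mathbb R^{n+1}$ with $\mathcal R\subset\mathbb R^n$ compact and convex; the unit effect is $u=(1,\mathbf 0)^{\mathrm t}$. The effect set is $\mathcal E=\{e\in\mathbb R^{n+1}: 0\le e\cdot\omega\le 1\ \forall\omega\in\Omega\}$ (Euclidean inner product). A measurement is a finite family $\{e_y\}\subset\mathcal E$ with $\sum_y e_y=u$; outcome $y$ on state $\omega$ has probability $e_y\cdot\omega$. The classical capacity $\chi_C(\Omega)$ is the supremum of the mutual information $I(X:Y)=\sum_{x,y}p(x,y)\log_2\frac{p(x,y)}{p(x)p(y)}$ over all finite message sets with probability distributions $p_x$, encoding states $\omega_x\in\Omega$ and measurements $\{e_y\}$, where $p(x,y)=p_x\,e_y\cdot\omega_x$. *)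

theory Defs
  imports "HOL-Analysis.Analysis"
begin

text \<open>Vectors of R^(n+1) are represented as pairs (t, v) :: real \<times> (real^'n), whose
  inner product (library Product_Vector) is t*t' + v \<bullet> v', i.e. the Euclidean one.\<close>

definition gpt_state :: "real^'n \<Rightarrow> real \<times> (real^'n)" where
  "gpt_state r = (1, r)"

definition unit_effect :: "real \<times> (real^'n)" where
  "unit_effect = (1, 0)"

definition state_space :: "(real^'n) set \<Rightarrow> (real \<times> (real^'n)) set" where
  "state_space R = gpt_state ` R"

definition effects :: "(real^'n) set \<Rightarrow> (real \<times> (real^'n)) set" where
  "effects R = {e. \<forall>w\<in>state_space R. 0 \<le> e \<bullet> w \<and> e \<bullet> w \<le> 1}"

definition mutual_info :: "('x \<Rightarrow> 'y \<Rightarrow> real) \<Rightarrow> 'x set \<Rightarrow> 'y set \<Rightarrow> real" where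
  "mutual_info P X Y =
     (\<Sum>x\<in>X. \<Sum>y\<in>Y. if P x y = 0 then 0
        else P x y * log 2 (P x y / ((\<Sum>y'\<in>Y. P x y') * (\<Sum>x'\<in>X. P x' y))))"

definition achievable_info :: "(real^'n) set \<Rightarrow> real set" where
  "achievable_info R =
    {mutual_info (\<lambda>x y. p x * (e y \<bullet> w x)) X Y | (X :: nat set) (Y :: nat set) p w e.
       finite X \<and> finite Y \<and> (\<forall>x\<in>X. 0 \<le> p x) \<and> sum p X = 1 \<and>
       (\<forall>x\<in>X. w x \<in> state_space R) \<and> (\<forall>y\<in>Y. e y \<in> effects R) \<and>
       (\<Sum>y\<in>Y. e y) = unit_effect}"

definition classical_capacity :: "(real^'n) set \<Rightarrow> ereal" where
  "classical_capacity R = Sup (ereal ` achievable_info R)"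

definition elog2 :: "ereal \<Rightarrow> ereal" where
  "elog2 x = (if x = \<infinity> then \<infinity> else if 0 < x then ereal (log 2 (real_of_ereal x)) else -\<infinity>)"

end

theory Submission imports Defs begin

lemma xlogx_bound:
  fixes b :: real assumes "0 \<le> b" shows "(b - 1) / ln 2 \<le> b * log 2 b"
proof (cases "b = 0")
  case True thus ?thesis by simp
next
  case False
  hence bp: "0 < b" using assms by simp
  have "ln (1/b) \<le> 1/b - 1" using ln_le_minus_one bp by simp
  hence "1 - 1/b \<le> ln b" using bp by (simp add: ln_div)
  hence "b * (1 - 1/b) \<le> b * ln b" using bp by (simp add: mult_left_mono)
  hence "b - 1 \<le> b * ln b" using bp by (simp add: algebra_simps)
  hence "(b - 1) / ln 2 \<le> (b * ln b) / ln 2" by (simp add: divide_right_mono)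
  thus ?thesis by (simp add: log_def)
qed

lemma main_bound:
  fixes X Y :: "nat set" and p g :: "nat \<Rightarrow> real" and r m :: "nat \<Rightarrow> real^'n"
    and w e :: "nat \<Rightarrow> real \<times> (real^'n)" and s :: real
  assumes fX: "finite X" and fY: "finite Y" and p0: "\<forall>x\<in>X. 0 \<le> p x" and p1: "sum p X = 1"
    and ew: "\<forall>x\<in>X. \<forall>y\<in>Y. 0 \<le> e y \<bullet> w x"
    and eu: "(\<Sum>y\<in>Y. e y) = (1, 0)"
    and eg: "\<forall>y\<in>Y. e y = g y *\<^sub>R (1, m y)" and g0: "\<forall>y\<in>Y. 0 \<le> g y"
    and wr: "\<forall>x\<in>X. w x = (1, r x)"
    and bound: "\<forall>x\<in>X. \<forall>y\<in>Y. 0 < 1 + m y \<bullet> r x \<longrightarrow> log 2 (1 + m y \<bullet> r x) \<le> s"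
  shows "mutual_info (\<lambda>x y. p x * (e y \<bullet> w x)) X Y \<le> s"
proof -
  define P where "P x y = p x * (e y \<bullet> w x)" for x y
  define a where "a x y = 1 + m y \<bullet> r x" for x y
  define rb where "rb = (\<Sum>x\<in>X. p x *\<^sub>R r x)"
  define b where "b y = 1 + m y \<bullet> rb" for y
  have Pxy: "P x y = p x * g y * a x y" if "x \<in> X" "y \<in> Y" for x y
    using eg wr that by (simp add: P_def a_def algebra_simps)
  have P0: "0 \<le> P x y" if "x \<in> X" "y \<in> Y" for x y
    using ew p0 that by (simp add: P_def)
  have colsum: "(\<Sum>x\<in>X. P x y) = g y * b y" if "y \<in> Y" for y
  proof -
    have "(\<Sum>x\<in>X. P x y) = (\<Sum>x\<in>X. g y * (p x + m y \<bullet> (p x *\<^sub>R r x)))"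
      by (rule sum.cong) (simp_all add: Pxy that a_def algebra_simps)
    also have "\<dots> = g y * (sum p X + m y \<bullet> rb)"
      by (simp add: sum_distrib_left[symmetric] sum.distrib rb_def inner_sum_right)
    finally show ?thesis using p1 by (simp add: b_def)
  qed
  have rowsum: "(\<Sum>y\<in>Y. P x y) = p x" if "x \<in> X" for x
  proof -
    have "(\<Sum>y\<in>Y. P x y) = p x * ((\<Sum>y\<in>Y. e y) \<bullet> w x)"
      by (simp add: P_def sum_distrib_left inner_sum_left)
    thus ?thesis using eu wr that by simp
  qed
  have gsum: "sum g Y = 1"
  proof -
    have "(\<Sum>y\<in>Y. e y \<bullet> (1, 0)) = (\<Sum>y\<in>Y. e y) \<bullet> (1, 0)" by (simp add: inner_sum_left)
    moreover have "(\<Sum>y\<in>Y. e y \<bullet> (1, 0)) = sum g Y" by (rule sum.cong) (simp_all add: eg)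
    ultimately show ?thesis using eu by simp
  qed
  have trm: "(if P x y = 0 then 0 else P x y * log 2 (P x y / ((\<Sum>y'\<in>Y. P x y') * (\<Sum>x'\<in>X. P x' y))))
      = (if P x y = 0 then 0 else P x y * log 2 (a x y)) - P x y * log 2 (b y)"
    if x: "x \<in> X" and y: "y \<in> Y" for x y
  proof (cases "P x y = 0")
    case True thus ?thesis by simp
  next
    case False
    have pP: "0 < P x y" using False P0[OF x y] by simp
    have px: "0 < p x" using pP Pxy[OF x y] p0 x g0 y
      by (metis less_eq_real_def mult_eq_0_iff)
    have gy: "0 < g y" using pP Pxy[OF x y] p0 x g0 y
      by (metis less_eq_real_def mult_eq_0_iff)
    have ax: "0 < a x y" using pP Pxy[OF x y] px gy
      by (metis mult_pos_pos zero_less_mult_pos)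
    have "P x y \<le> (\<Sum>x'\<in>X. P x' y)"
      using member_le_sum[of x X "\<lambda>x'. P x' y"] P0 x y fX by auto
    hence "0 < g y * b y" using pP colsum[OF y] by simp
    hence bpos: "0 < b y" using gy zero_less_mult_pos by blast
    have "P x y / ((\<Sum>y'\<in>Y. P x y') * (\<Sum>x'\<in>X. P x' y)) = a x y / b y"
      using Pxy[OF x y] rowsum[OF x] colsum[OF y] px gy by (simp add: field_simps)
    thus ?thesis using False ax bpos by (simp add: log_divide algebra_simps)
  qed
  have "mutual_info (\<lambda>x y. p x * (e y \<bullet> w x)) X Y
      = (\<Sum>x\<in>X. \<Sum>y\<in>Y. (if P x y = 0 then 0 else P x y * log 2 (a x y)) - P x y * log 2 (b y))"
    unfolding mutual_info_def P_def[symmetric]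
    by (intro sum.cong refl) (simp add: trm)
  also have "\<dots> = (\<Sum>x\<in>X. \<Sum>y\<in>Y. (if P x y = 0 then 0 else P x y * log 2 (a x y)))
      - (\<Sum>x\<in>X. \<Sum>y\<in>Y. P x y * log 2 (b y))"
    by (simp add: sum_subtractf)
  also have "\<dots> \<le> s - 0"
  proof (rule diff_mono)
    have "(\<Sum>x\<in>X. \<Sum>y\<in>Y. (if P x y = 0 then 0 else P x y * log 2 (a x y)))
        \<le> (\<Sum>x\<in>X. \<Sum>y\<in>Y. P x y * s)"
    proof (intro sum_mono)
      fix x y assume x: "x \<in> X" and y: "y \<in> Y"
      show "(if P x y = 0 then 0 else P x y * log 2 (a x y)) \<le> P x y * s"
      proof (cases "P x y = 0")
        case True thus ?thesis by simp
      next
        case False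
        have pP: "0 < P x y" using False P0[OF x y] by simp
        have "0 < a x y" using pP Pxy[OF x y] p0 x g0 y
          by (metis less_eq_real_def mult_eq_0_iff mult_nonneg_nonneg not_less zero_less_mult_iff)
        hence "log 2 (a x y) \<le> s" using bound x y by (simp add: a_def)
        thus ?thesis using False pP by (simp add: mult_left_mono)
      qed
    qed
    also have "\<dots> = s" using rowsum p1
      by (simp add: sum_distrib_right[symmetric])
    finally show "(\<Sum>x\<in>X. \<Sum>y\<in>Y. (if P x y = 0 then 0 else P x y * log 2 (a x y))) \<le> s" .
  next
    have "(\<Sum>x\<in>X. \<Sum>y\<in>Y. P x y * log 2 (b y)) = (\<Sum>y\<in>Y. (\<Sum>x\<in>X. P x y) * log 2 (b y))"
      by (subst sum.swap) (simp add: sum_distrib_right)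
    also have "\<dots> = (\<Sum>y\<in>Y. g y * (b y * log 2 (b y)))"
      by (rule sum.cong) (simp_all add: colsum)
    also have "\<dots> \<ge> (\<Sum>y\<in>Y. g y * ((b y - 1) / ln 2))"
    proof (rule sum_mono)
      fix y assume y: "y \<in> Y"
      show "g y * ((b y - 1) / ln 2) \<le> g y * (b y * log 2 (b y))"
      proof (cases "g y = 0")
        case True thus ?thesis by simp
      next
        case False
        hence gy: "0 < g y" using g0 y by force
        have "0 \<le> g y * b y" using colsum[OF y] P0 y sum_nonneg by metis
        hence "0 \<le> b y" using gy by (simp add: zero_le_mult_iff)
        thus ?thesis using xlogx_bound[of "b y"] gy mult_left_mono[of "(b y - 1) / ln 2" "b y * log 2 (b y)" "g y"] by simp
      qed
    qed
    also have "(\<Sum>y\<in>Y. g y * ((b y - 1) / ln 2)) = ((\<Sum>y\<in>Y. g y * b y) - sum g Y) / ln 2"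
      by (simp add: sum_divide_distrib[symmetric] sum_subtractf algebra_simps)
    also have "(\<Sum>y\<in>Y. g y * b y) = 1"
    proof -
      have "(\<Sum>y\<in>Y. g y * b y) = (\<Sum>y\<in>Y. \<Sum>x\<in>X. P x y)" by (rule sum.cong) (simp_all add: colsum)
      also have "\<dots> = (\<Sum>x\<in>X. \<Sum>y\<in>Y. P x y)" by (rule sum.swap)
      also have "\<dots> = 1" using rowsum p1 by simp
      finally show ?thesis .
    qed
    finally show "0 \<le> (\<Sum>x\<in>X. \<Sum>y\<in>Y. P x y * log 2 (b y))" using gsum by simp
  qed
  finally show ?thesis by simp
qed

lemma elog2_mono: "x \<le> y \<Longrightarrow> elog2 x \<le> elog2 y"
  unfolding elog2_def
  by (cases x; cases y) auto

theorem proposition1: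
  fixes R :: "(real^'n) set" and M :: "(real^'n) set"
  assumes "compact R" and "convex R"
    and "\<forall>e\<in>effects R. \<exists>\<gamma> m. 0 \<le> \<gamma> \<and> \<gamma> \<le> 1 \<and> m \<in> M \<and> e = \<gamma> *\<^sub>R (1, m)"
  shows "classical_capacity R \<le> (SUP rm\<in>R \<times> M. elog2 (ereal (1 + snd rm \<bullet> fst rm)))
       \<and> (SUP rm\<in>R \<times> M. elog2 (ereal (1 + snd rm \<bullet> fst rm)))
           \<le> elog2 (1 + (SUP m\<in>M. ereal (norm m)) * (SUP r\<in>R. ereal (norm r)))"
proof
  define S where "S = (SUP rm\<in>R \<times> M. elog2 (ereal (1 + snd rm \<bullet> fst rm)))"
  have M0: "0 \<in> M"
  proof -
    have "unit_effect \<in> effects R"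
      by (auto simp: effects_def unit_effect_def state_space_def gpt_state_def)
    then obtain \<gamma> m where "m \<in> M" "unit_effect = \<gamma> *\<^sub>R (1, m)" using assms(3) by blast
    thus ?thesis by (auto simp: unit_effect_def)
  qed
  show "classical_capacity R \<le> S"
    unfolding classical_capacity_def
  proof (rule Sup_least)
    fix z assume "z \<in> ereal ` achievable_info R"
    then obtain I where zI: "z = ereal I" and I: "I \<in> achievable_info R" by blast
    from I obtain X Y :: "nat set" and p w e where Idef: "I = mutual_info (\<lambda>x y. p x * (e y \<bullet> w x)) X Y"
      and fX: "finite X" and fY: "finite Y" and p0: "\<forall>x\<in>X. 0 \<le> p x" and p1: "sum p X = 1"
      and wS: "\<forall>x\<in>X. w x \<in> state_space R" and eE: "\<forall>y\<in>Y. e y \<in> effects R"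
      and eu: "(\<Sum>y\<in>Y. e y) = unit_effect"
      unfolding achievable_info_def mem_Collect_eq by (elim exE conjE) 
    have z: "z = ereal (mutual_info (\<lambda>x y. p x * (e y \<bullet> w x)) X Y)" using zI Idef by simp
    have "X \<noteq> {}" using p1 by auto
    then obtain x0 where "x0 \<in> X" by blast
    hence "R \<noteq> {}" using wS by (auto simp: state_space_def)
    then obtain r0 where r0: "r0 \<in> R" by blast
    have "elog2 (ereal (1 + snd (r0, 0::real^'n) \<bullet> fst (r0, 0::real^'n))) \<le> S"
      unfolding S_def by (rule SUP_upper) (use r0 M0 in auto)
    hence "ereal 0 \<le> S" by (simp add: elog2_def)
    hence S0: "0 \<le> S" by (metis zero_ereal_def)
    show "z \<le> S"
    proof (cases "S = \<infinity>")
      case True thus ?thesis by simp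
    next
      case False
      define s where "s = real_of_ereal S"
      have Ss: "S = ereal s" using False S0 unfolding s_def by (cases S) simp_all
      have "\<forall>y\<in>Y. \<exists>gm. 0 \<le> fst gm \<and> snd gm \<in> M \<and> e y = fst gm *\<^sub>R (1, snd gm)"
      proof
        fix y assume "y \<in> Y"
        then obtain \<gamma> m where "0 \<le> \<gamma>" "m \<in> M" "e y = \<gamma> *\<^sub>R (1, m)"
          using eE assms(3) by blast
        thus "\<exists>gm. 0 \<le> fst gm \<and> snd gm \<in> M \<and> e y = fst gm *\<^sub>R (1, snd gm)"
          by (intro exI[of _ "(\<gamma>, m)"]) simp
      qed
      then obtain gm where gm: "\<forall>y\<in>Y. 0 \<le> fst (gm y) \<and> snd (gm y) \<in> M \<and> e y = fst (gm y) *\<^sub>R (1, snd (gm y))"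
        using bchoice by metis
      have "\<forall>x\<in>X. \<exists>r. r \<in> R \<and> w x = (1, r)"
        using wS by (auto simp: state_space_def gpt_state_def)
      then obtain r where r: "\<forall>x\<in>X. r x \<in> R \<and> w x = (1, r x)"
        using bchoice by metis
      have ew: "\<forall>x\<in>X. \<forall>y\<in>Y. 0 \<le> e y \<bullet> w x"
        using eE wS by (auto simp: effects_def)
      have bound: "\<forall>x\<in>X. \<forall>y\<in>Y. 0 < 1 + snd (gm y) \<bullet> r x \<longrightarrow> log 2 (1 + snd (gm y) \<bullet> r x) \<le> s"
      proof (intro ballI impI)
        fix x y assume x: "x \<in> X" and y: "y \<in> Y" and pos: "0 < 1 + snd (gm y) \<bullet> r x"
        have "elog2 (ereal (1 + snd (r x, snd (gm y)) \<bullet> fst (r x, snd (gm y)))) \<le> S"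
          unfolding S_def by (rule SUP_upper) (use r x gm y in auto)
        thus "log 2 (1 + snd (gm y) \<bullet> r x) \<le> s" using pos Ss by (simp add: elog2_def)
      qed
      have "mutual_info (\<lambda>x y. p x * (e y \<bullet> w x)) X Y \<le> s"
      proof (rule main_bound[OF fX fY p0 p1 ew _ _ _ _ bound])
        show "(\<Sum>y\<in>Y. e y) = (1, 0)" using eu by (simp add: unit_effect_def)
        show "\<forall>y\<in>Y. e y = fst (gm y) *\<^sub>R (1, snd (gm y))" using gm by blast
        show "\<forall>y\<in>Y. 0 \<le> fst (gm y)" using gm by blast
        show "\<forall>x\<in>X. w x = (1, r x)" using r by blast
      qed
      thus ?thesis using z Ss by simp
    qed
  qed
next
  show "(SUP rm\<in>R \<times> M. elog2 (ereal (1 + snd rm \<bullet> fst rm)))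
           \<le> elog2 (1 + (SUP m\<in>M. ereal (norm m)) * (SUP r\<in>R. ereal (norm r)))"
  proof (rule SUP_least)
    fix rm assume rm: "rm \<in> R \<times> M"
    have m: "ereal (norm (snd rm)) \<le> (SUP m\<in>M. ereal (norm m))"
      by (rule SUP_upper) (use rm in auto)
    have r: "ereal (norm (fst rm)) \<le> (SUP r\<in>R. ereal (norm r))"
      by (rule SUP_upper) (use rm in auto)
    have "ereal (norm (snd rm)) * ereal (norm (fst rm)) \<le> (SUP m\<in>M. ereal (norm m)) * (SUP r\<in>R. ereal (norm r))"
      by (rule ereal_mult_mono') (use m r in auto)
    moreover have "snd rm \<bullet> fst rm \<le> norm (snd rm) * norm (fst rm)" by (rule norm_cauchy_schwarz)
    ultimately have "ereal (snd rm \<bullet> fst rm) \<le> (SUP m\<in>M. ereal (norm m)) * (SUP r\<in>R. ereal (norm r))"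
      using order_trans[of "ereal (snd rm \<bullet> fst rm)" "ereal (norm (snd rm)) * ereal (norm (fst rm))"] by simp
    hence "1 + ereal (snd rm \<bullet> fst rm) \<le> 1 + (SUP m\<in>M. ereal (norm m)) * (SUP r\<in>R. ereal (norm r))"
      by (rule add_left_mono)
    hence "ereal (1 + snd rm \<bullet> fst rm) \<le> 1 + (SUP m\<in>M. ereal (norm m)) * (SUP r\<in>R. ereal (norm r))"
      by (simp add: one_ereal_def)
    thus "elog2 (ereal (1 + snd rm \<bullet> fst rm)) \<le> elog2 (1 + (SUP m\<in>M. ereal (norm m)) * (SUP r\<in>R. ereal (norm r)))"
      by (rule elog2_mono)
  qed
qed

end
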